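(* Let $\alpha,\beta\in(0,1]$ and let $E$ be an $F^+_{\alpha\beta}$-set. Let $\theta>\frac{1+2\alpha}{2\alpha}$ and let $h\in\mathbb{H}$ satisfy $h(x)\ge C\,x^{\frac{\beta}{2}+\alpha}\log^{\theta}(1/x)$ for some constant $C>0$ and all sufficiently small $x>0$. Then $\mathcal{H}^h(E)>0$.
   Context: $\mathbb{H}$ is the class of non-decreasing, right continuous functions $h:[0,\infty)\to[0,\infty)$ with $h(0)=0$. For $h\in\mathbb{H}$, $\mathcal{H}^h$ is the $h$-dimensional Hausdorff measure: $\mathcal{H}^h(F)=\sup_{\delta>0}\inf\{\sum_i h(\mathrm{diam}(F_i)): F\subseteq\bigcup_i F_i,\ \mathrm{diam}(F_i)<\delta\}$; $\mathcal{H}^s$ denotes $\mathcal{H}^{h}$ with $h(x)=x^s$. $\mathbb{S}$ is the unit circle. For $\alpha,\beta\in(0,1]$, $E\subseteq\mathbb{R}^2$ is an $F^+_{\alpha\beta}$-set if there is $L\subseteq\mathbb{S}$ with $\mathcal{H}^{\beta}(L)>0$ such that for each $e\in L$ there is a line segment $\ell_e$ in direction $e$ with $\mathcal{H}^{\alpha}(\ell_e\cap E)>0$. *)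

theory Defs
  imports "HOL-Analysis.Analysis"
begin

text \<open>The gauge class H: non-decreasing, right continuous functions
  h : [0,\<infinity>) \<rightarrow> [0,\<infinity>) with h 0 = 0 (only values on [0,\<infinity>) matter).\<close>
definition gauge_class :: "(real \<Rightarrow> real) set" where
  "gauge_class = {h. mono_on {0..} h \<and> (\<forall>x\<ge>0. h x \<ge> 0) \<and> h 0 = 0 \<and>
                     (\<forall>x\<ge>0. continuous (at_right x) h)}"

text \<open>Sets of finite diameter are exactly the bounded sets;
  boundedness is required explicitly because the library diameter is only meaningful
  for bounded sets.\<close>
definition hausdorff_h :: "(real \<Rightarrow> real) \<Rightarrow> 'a::metric_space set \<Rightarrow> ennreal" where
  "hausdorff_h h F =
     (SUP \<delta>\<in>{0<..}. INF U\<in>{U :: nat \<Rightarrow> 'a set. F \<subseteq> (\<Union>i. U i) \<and>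
                         (\<forall>i. bounded (U i) \<and> diameter (U i) < \<delta>)}.
                 (\<Sum>i. ennreal (h (diameter (U i)))))"

definition F_plus :: "real \<Rightarrow> real \<Rightarrow> (real^2) set \<Rightarrow> bool" where
  "F_plus \<alpha> \<beta> E \<longleftrightarrow>
     (\<exists>L \<subseteq> sphere (0::real^2) 1. hausdorff_h (\<lambda>x. x powr \<beta>) L > 0 \<and>
        (\<forall>e\<in>L. \<exists>a t. t > 0 \<and>
            hausdorff_h (\<lambda>x. x powr \<alpha>) (closed_segment a (a + t *\<^sub>R e) \<inter> E) > 0))"

end

theory Submission
  imports Defs
begin

definition cont :: "real \<Rightarrow> (real^2) set \<Rightarrow> ennreal" where
 "cont a A = (INF U\<in>{U::nat \<Rightarrow> (real^2) set. A \<subseteq> (\<Union>i. U i) \<and> (\<forall>i. bounded (U i))}.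
     \<Sum>i. ennreal (diameter (U i) powr a))"

lemma cont_cover:
  assumes "A \<subseteq> (\<Union>i. U i)" "\<And>i. bounded (U i)"
  shows "cont a A \<le> (\<Sum>i. ennreal (diameter (U i) powr a))"
  unfolding cont_def using assms by (intro INF_lower) auto

lemma cont_mono: "A \<subseteq> B \<Longrightarrow> cont a A \<le> cont a B"
  unfolding cont_def by (rule INF_superset_mono) auto

lemma cont_finite_cover:
  assumes "finite F" "A \<subseteq> (\<Union>x\<in>F. S x)" "\<And>x. x \<in> F \<Longrightarrow> bounded (S x)"
  shows "cont a A \<le> (\<Sum>x\<in>F. ennreal (diameter (S x) powr a))"
proof -
  obtain g where g: "bij_betw g {0..<card F} F" using ex_bij_betw_nat_finite[OF assms(1)] by blast
  define U where "U i = (if i < card F then S (g i) else {})" for i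
  have "A \<subseteq> (\<Union>i. U i)"
  proof
    fix x assume "x \<in> A"
    then obtain y where y: "y \<in> F" "x \<in> S y" using assms(2) by blast
    then obtain i where "i < card F" "g i = y" using g unfolding bij_betw_def by force
    then show "x \<in> (\<Union>i. U i)" using y unfolding U_def by auto
  qed
  moreover have "\<And>i. bounded (U i)"
  proof -
    fix i show "bounded (U i)"
    proof (cases "i < card F")
      case True
      then have "g i \<in> F" using g by (auto simp: bij_betw_def)
      then show ?thesis using True assms(3) unfolding U_def by auto
    qed (auto simp: U_def)
  qed
  ultimately have "cont a A \<le> (\<Sum>i. ennreal (diameter (U i) powr a))" by (rule cont_cover)
  also have "\<dots> = (\<Sum>i\<in>{0..<card F}. ennreal (diameter (U i) powr a))"
    by (rule suminf_finite) (auto simp: U_def)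
  also have "\<dots> = (\<Sum>i\<in>{0..<card F}. ennreal (diameter (S (g i)) powr a))"
    by (rule sum.cong) (auto simp: U_def)
  also have "\<dots> = (\<Sum>x\<in>F. ennreal (diameter (S x) powr a))"
    using sum.reindex_bij_betw[OF g, of "\<lambda>x. ennreal (diameter (S x) powr a)"] by simp
  finally show ?thesis .
qed

lemma cont_le_diam:
  assumes "bounded A"
  shows "cont a A \<le> ennreal (diameter A powr a)"
  using cont_finite_cover[of "{0::nat}" A "\<lambda>_. A" a] assms by auto

lemma cont_empty[simp]: "cont a {} = 0"
  using cont_le_diam[of "{}" a] by simp

lemma ennreal_term_le_suminf: fixes f :: "nat \<Rightarrow> ennreal" shows "f i \<le> suminf f"
proof -
  have "sum f {i} \<le> suminf f" by (rule sum_le_suminf) auto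
  then show ?thesis by simp
qed

lemma ennreal_less_add_pos: "x < top \<Longrightarrow> 0 < e \<Longrightarrow> x < x + ennreal e"
  by (cases x rule: ennreal_cases) (auto simp flip: ennreal_plus simp: ennreal_less_iff)

lemma cont_Union: "cont a (\<Union>n. A n) \<le> (\<Sum>n. cont a (A n))"
proof (rule ennreal_le_epsilon)
  fix e :: real assume fin: "(\<Sum>n. cont a (A n)) < top" and e: "0 < e"
  have "\<exists>U. (A n \<subseteq> (\<Union>i. U i) \<and> (\<forall>i. bounded (U i))) \<and>
          (\<Sum>i. ennreal (diameter (U i) powr a)) < cont a (A n) + ennreal (e / 2 ^ Suc n)" for n
  proof -
    have "cont a (A n) \<le> (\<Sum>n. cont a (A n))"
      by (rule ennreal_term_le_suminf)
    then have "cont a (A n) < top" using fin by auto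
    then have "cont a (A n) < cont a (A n) + ennreal (e / 2 ^ Suc n)"
      by (rule ennreal_less_add_pos) (use e in auto)
    then show ?thesis unfolding cont_def[of a "A n"] INF_less_iff by auto
  qed
  then obtain U where U: "\<And>n. A n \<subseteq> (\<Union>i. U n i)" "\<And>n i. bounded (U n i)"
     "\<And>n. (\<Sum>i. ennreal (diameter (U n i) powr a)) < cont a (A n) + ennreal (e / 2 ^ Suc n)"
    by metis
  define V where "V m = case_prod U (prod_decode m)" for m
  have "(\<Union>n. A n) \<subseteq> (\<Union>m. V m)"
  proof
    fix x assume "x \<in> (\<Union>n. A n)"
    then obtain n i where "x \<in> U n i" using U(1) by blast
    then have "x \<in> V (prod_encode (n,i))" unfolding V_def by simp
    then show "x \<in> (\<Union>m. V m)" by blast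
  qed
  moreover have "\<And>m. bounded (V m)" unfolding V_def using U(2) by (simp add: case_prod_beta)
  ultimately have "cont a (\<Union>n. A n) \<le> (\<Sum>m. ennreal (diameter (V m) powr a))" by (rule cont_cover)
  also have "\<dots> = (\<Sum>n. \<Sum>i. ennreal (diameter (U n i) powr a))"
    unfolding V_def
    by (rule suminf_ennreal_2dimen[where f = "\<lambda>p. ennreal (diameter (case_prod U p) powr a)"]) simp
  also have "\<dots> \<le> (\<Sum>n. cont a (A n) + ennreal (e / 2 ^ Suc n))"
    by (rule suminf_le) (use U(3) in \<open>auto intro: less_imp_le\<close>)
  also have "\<dots> = (\<Sum>n. cont a (A n)) + (\<Sum>n. ennreal (e / 2 ^ Suc n))"
    by (rule suminf_add[symmetric]) auto
  also have "(\<Sum>n. ennreal (e / 2 ^ Suc n)) = ennreal (\<Sum>n. e / 2 ^ Suc n)"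
  proof (rule suminf_ennreal2)
    have "(\<lambda>n. e / 2 ^ Suc n) = (\<lambda>n. (e/2) * (1/2::real)^n)" by (auto simp: power_divide)
    then show "summable (\<lambda>n. e / 2 ^ Suc n)"
      using summable_mult[OF summable_geometric[of "1/2::real"], of "e/2"] by simp
  qed (use e in auto)
  also have "(\<Sum>n. e / 2 ^ Suc n) = e"
    using power_half_series sums_mult[of "\<lambda>n. (1/2::real)^Suc n" 1 e] e
    by (auto dest!: sums_unique simp: field_simps power_divide)
  finally show "cont a (\<Union>n. A n) \<le> (\<Sum>n. cont a (A n)) + ennreal e" .
qed

lemma cont_Un: "cont a (A \<union> B) \<le> cont a A + cont a B"
proof -
  define C where "C n = (if n = 0 then A else if n = 1 then B else {})" for n :: nat
  have "A \<union> B = (\<Union>n. C n)" unfolding C_def by (auto split: if_splits)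
  then have "cont a (A \<union> B) \<le> (\<Sum>n. cont a (C n))" using cont_Union by simp
  also have "\<dots> = (\<Sum>n\<in>{0,1}. cont a (C n))" by (rule suminf_finite) (auto simp: C_def)
  finally show ?thesis by (simp add: C_def)
qed

lemma hausdorff_zero_of_cont:
  assumes a: "0 < a" and c: "cont a A = 0"
  shows "hausdorff_h (\<lambda>x. x powr a) A = 0"
proof -
  have "(INF U\<in>{U :: nat \<Rightarrow> (real^2) set. A \<subseteq> (\<Union>i. U i) \<and>
                         (\<forall>i. bounded (U i) \<and> diameter (U i) < d)}.
                 (\<Sum>i. ennreal (diameter (U i) powr a))) = 0" if d: "d > 0" for d
  proof -
    have "(INF U\<in>{U :: nat \<Rightarrow> (real^2) set. A \<subseteq> (\<Union>i. U i) \<and>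
                         (\<forall>i. bounded (U i) \<and> diameter (U i) < d)}.
                 (\<Sum>i. ennreal (diameter (U i) powr a))) \<le> 0 + ennreal e" if e: "e > 0" for e
    proof -
      define e' where "e' = min e (d powr a)"
      have e': "e' > 0" using e d by (auto simp: e'_def)
      then have "cont a A < ennreal e'" using c by simp
      then obtain U where U: "A \<subseteq> (\<Union>i. U i)" "\<And>i. bounded (U i)"
          "(\<Sum>i. ennreal (diameter (U i) powr a)) < ennreal e'"
        unfolding cont_def INF_less_iff by auto
      have "diameter (U i) < d" for i
      proof (rule ccontr)
        assume "\<not> diameter (U i) < d"
        then have h1: "d \<le> diameter (U i)" by simp
        have h2: "d powr a \<le> diameter (U i) powr a"
          by (rule powr_mono2) (use a d h1 in simp_all)
        have h3: "ennreal (diameter (U i) powr a) \<le> (\<Sum>i. ennreal (diameter (U i) powr a))"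
          by (rule ennreal_term_le_suminf)
        have "ennreal (d powr a) \<le> ennreal (diameter (U i) powr a)" using h2 by (rule ennreal_leI)
        then have "ennreal (d powr a) \<le> (\<Sum>i. ennreal (diameter (U i) powr a))" using h3 by (rule order.trans)
        then have "ennreal (d powr a) < ennreal e'" using U(3) by (rule le_less_trans)
        then have "d powr a < e'" by (simp add: ennreal_less_iff)
        then show False unfolding e'_def by simp
      qed
      note dd = this
      have "(INF U\<in>{U :: nat \<Rightarrow> (real^2) set. A \<subseteq> (\<Union>i. U i) \<and>
                         (\<forall>i. bounded (U i) \<and> diameter (U i) < d)}.
                 (\<Sum>i. ennreal (diameter (U i) powr a))) \<le> (\<Sum>i. ennreal (diameter (U i) powr a))"
      proof (rule INF_lower)
        show "U \<in> {U :: nat \<Rightarrow> (real^2) set. A \<subseteq> (\<Union>i. U i) \<and>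
                         (\<forall>i. bounded (U i) \<and> diameter (U i) < d)}"
          unfolding mem_Collect_eq using U(1,2) dd by blast
      qed
      also have "\<dots> \<le> ennreal e'" using U(3) by (simp add: less_imp_le)
      also have "ennreal e' \<le> ennreal e" by (rule ennreal_leI) (simp add: e'_def)
      finally show ?thesis by (simp only: add.left_neutral)
    qed
    note H = this
    have "(INF U\<in>{U :: nat \<Rightarrow> (real^2) set. A \<subseteq> (\<Union>i. U i) \<and>
                         (\<forall>i. bounded (U i) \<and> diameter (U i) < d)}.
                 (\<Sum>i. ennreal (diameter (U i) powr a))) \<le> 0"
      by (rule ennreal_le_epsilon) (rule H)
    then show ?thesis by (simp only: le_zero_eq)
  qed
  note Z = this
  have "hausdorff_h (\<lambda>x. x powr a) A = (SUP d\<in>{0::real<..}. (0::ennreal))"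
    unfolding hausdorff_h_def by (rule SUP_cong) (auto simp: Z)
  then show ?thesis by simp
qed

lemma cont_pos_of_hausdorff:
  assumes "0 < a" "hausdorff_h (\<lambda>x. x powr a) A > 0"
  shows "cont a A > 0"
  using hausdorff_zero_of_cont[OF assms(1)] assms(2) by (auto simp: zero_less_iff_neq_zero)



lemma norm_vec2: "norm (x::real^2) = sqrt ((x$1)^2 + (x$2)^2)"
  by (simp add: norm_vec_def L2_set_def sum_2)

lemma unit_vec2: "norm (x::real^2) = 1 \<Longrightarrow> (x$1)^2 + (x$2)^2 = 1"
  by (simp add: norm_vec2)

lemma coverage_real:
  fixes a b a' b' d :: real
  assumes "a^2 + b^2 = 1" "a'^2 + b'^2 = 1" "\<bar>b\<bar> \<le> \<bar>a\<bar>" "\<bar>b'\<bar> \<le> \<bar>a'\<bar>"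
    "(0 \<le> a) = (0 \<le> a')" "\<bar>b - b'\<bar> \<le> d"
  shows "(a - a')^2 + (b - b')^2 \<le> 2 * d^2"
proof -
  have eq: "(a - a') * (a + a') = (b' - b) * (b' + b)"
    using assms(1,2) by (simp add: algebra_simps power2_eq_square)
  have s: "\<bar>a + a'\<bar> = \<bar>a\<bar> + \<bar>a'\<bar>" using assms(5) by (auto simp: abs_if)
  have bb: "\<bar>b' + b\<bar> \<le> \<bar>a + a'\<bar>" using s assms(3,4) by linarith
  have "\<bar>a - a'\<bar> \<le> \<bar>b - b'\<bar>"
  proof (cases "a + a' = 0")
    case True
    then have "a = 0" "a' = 0" using s by auto
    then show ?thesis by simp
  next
    case False
    have "\<bar>a - a'\<bar> * \<bar>a + a'\<bar> = \<bar>b - b'\<bar> * \<bar>b' + b\<bar>"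
      using eq by (metis abs_minus_commute abs_mult)
    also have "\<dots> \<le> \<bar>b - b'\<bar> * \<bar>a + a'\<bar>" using bb by (simp add: mult_left_mono)
    finally show ?thesis using False by simp
  qed
  then have "(a - a')^2 \<le> (b - b')^2" by (metis abs_ge_zero power2_abs power_mono)
  moreover have "(b - b')^2 \<le> d^2" using assms(6) by (metis abs_ge_zero power2_abs power_mono)
  ultimately show ?thesis by linarith
qed

definition key :: "real \<Rightarrow> real^2 \<Rightarrow> bool \<times> bool \<times> int" where
  "key d e = (if \<bar>e$2\<bar> \<le> \<bar>e$1\<bar> then (True, 0 \<le> e$1, \<lfloor>e$2 / d\<rfloor>) else (False, 0 \<le> e$2, \<lfloor>e$1 / d\<rfloor>))"

lemma floor_eq_close:
  assumes "\<lfloor>x / d\<rfloor> = \<lfloor>y / d\<rfloor>" "(d::real) > 0"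
  shows "\<bar>x - y\<bar> \<le> d"
proof -
  have f: "of_int \<lfloor>x/d\<rfloor> \<le> x/d" "x/d < of_int \<lfloor>x/d\<rfloor> + 1"
     "of_int \<lfloor>y/d\<rfloor> \<le> y/d" "y/d < of_int \<lfloor>y/d\<rfloor> + 1"
    by (simp_all add: of_int_floor_le real_of_int_floor_add_one_gt)
  have "(of_int \<lfloor>x/d\<rfloor> :: real) = of_int \<lfloor>y/d\<rfloor>" using assms(1) by simp
  then have "\<bar>x / d - y / d\<bar> < 1" using f by linarith
  then have "\<bar>x - y\<bar> / d < 1" by (simp add: diff_divide_distrib[symmetric] abs_div_pos assms(2))
  then show ?thesis using assms(2) by (simp add: divide_less_eq)
qed

lemma key_close:
  assumes "norm e = 1" "norm e' = 1" "key d e = key d e'" "d > 0"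
  shows "dist e e' \<le> 2 * d"
proof -
  have u: "(e$1)^2 + (e$2)^2 = 1" "(e'$1)^2 + (e'$2)^2 = 1" using assms unit_vec2 by auto
  have "(e$1 - e'$1)^2 + (e$2 - e'$2)^2 \<le> 2 * d^2"
  proof (cases "\<bar>e$2\<bar> \<le> \<bar>e$1\<bar>")
    case True
    have k1: "key d e = (True, 0 \<le> e$1, \<lfloor>e$2 / d\<rfloor>)" using True by (simp add: key_def)
    have c: "\<bar>e'$2\<bar> \<le> \<bar>e'$1\<bar>"
    proof (rule ccontr)
      assume "\<not> \<bar>e'$2\<bar> \<le> \<bar>e'$1\<bar>"
      then have "key d e' = (False, 0 \<le> e'$2, \<lfloor>e'$1 / d\<rfloor>)" by (simp add: key_def)
      then show False using assms(3) k1 by simp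
    qed
    then have k2: "key d e' = (True, 0 \<le> e'$1, \<lfloor>e'$2 / d\<rfloor>)" by (simp add: key_def)
    have "\<bar>e'$2\<bar> \<le> \<bar>e'$1\<bar>" "(0 \<le> e$1) = (0 \<le> e'$1)" "\<lfloor>e$2 / d\<rfloor> = \<lfloor>e'$2 / d\<rfloor>"
      using assms(3) k1 k2 c by simp_all
    moreover have "\<bar>e$2 - e'$2\<bar> \<le> d" using floor_eq_close calculation(3) assms(4) by blast
    ultimately show ?thesis using coverage_real[of "e$1" "e$2" "e'$1" "e'$2" d] u True by simp
  next
    case False
    have k1: "key d e = (False, 0 \<le> e$2, \<lfloor>e$1 / d\<rfloor>)" using False by (simp add: key_def)
    have c: "\<not> \<bar>e'$2\<bar> \<le> \<bar>e'$1\<bar>"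
    proof
      assume "\<bar>e'$2\<bar> \<le> \<bar>e'$1\<bar>"
      then have "key d e' = (True, 0 \<le> e'$1, \<lfloor>e'$2 / d\<rfloor>)" by (simp add: key_def)
      then show False using assms(3) k1 by simp
    qed
    then have k2: "key d e' = (False, 0 \<le> e'$2, \<lfloor>e'$1 / d\<rfloor>)" by (simp add: key_def)
    have "\<not> \<bar>e'$2\<bar> \<le> \<bar>e'$1\<bar>" "(0 \<le> e$2) = (0 \<le> e'$2)" "\<lfloor>e$1 / d\<rfloor> = \<lfloor>e'$1 / d\<rfloor>"
      using assms(3) k1 k2 c by simp_all
    moreover have "\<bar>e$1 - e'$1\<bar> \<le> d" using floor_eq_close calculation(3) assms(4) by blast
    ultimately show ?thesis using coverage_real[of "e$2" "e$1" "e'$2" "e'$1" d] u False by simp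
  qed
  also have "\<dots> \<le> (2 * d)^2" by (simp add: power2_eq_square)
  finally have fin: "(e$1 - e'$1)^2 + (e$2 - e'$2)^2 \<le> (2 * d)^2" .
  have "sqrt ((e$1 - e'$1)^2 + (e$2 - e'$2)^2) \<le> 2 * d"
  proof -
    note h = fin
    have "sqrt ((e$1 - e'$1)^2 + (e$2 - e'$2)^2) \<le> sqrt ((2 * d)^2)"
      using h by (rule real_sqrt_le_mono)
    also have "\<dots> = 2 * d" using assms(4) by (simp only: real_sqrt_abs)
    finally show ?thesis .
  qed
  then show ?thesis by (simp add: dist_norm norm_vec2)
qed



definition Jint :: "real \<Rightarrow> real \<Rightarrow> int set" where
  "Jint lo hi = {\<lfloor>lo\<rfloor>..\<lfloor>hi\<rfloor>}"

lemma card_Jint: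
  assumes "lo \<le> hi"
  shows "real (card (Jint lo hi)) \<le> hi - lo + 2"
proof -
  have c: "card (Jint lo hi) = nat (\<lfloor>hi\<rfloor> - \<lfloor>lo\<rfloor> + 1)" by (simp add: Jint_def)
  have "\<lfloor>lo\<rfloor> \<le> \<lfloor>hi\<rfloor>" using assms by (rule floor_mono)
  then have "real (card (Jint lo hi)) = real_of_int (\<lfloor>hi\<rfloor> - \<lfloor>lo\<rfloor> + 1)" unfolding c by simp
  also have "\<dots> \<le> hi - lo + 2"
    using of_int_floor_le[of hi] real_of_int_floor_add_one_gt[of lo]
    by (simp only: of_int_add of_int_diff of_int_1)
  finally show ?thesis .
qed

lemma floor_in_Jint:
  assumes "\<bar>x - v\<bar> \<le> R" "(d::real) > 0"
  shows "\<lfloor>x / d\<rfloor> \<in> Jint ((v - R) / d) ((v + R) / d)"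
proof -
  have "(v - R) / d \<le> x / d" "x / d \<le> (v + R) / d"
    using assms by (auto intro!: divide_right_mono)
  then show ?thesis unfolding Jint_def by (auto intro: floor_mono)
qed

definition keys_near :: "real \<Rightarrow> real^2 \<Rightarrow> real \<Rightarrow> (bool \<times> bool \<times> int) set" where
  "keys_near d v R = UNIV \<times> UNIV \<times>
     (Jint ((v$1 - R) / d) ((v$1 + R) / d) \<union> Jint ((- v$1 - R) / d) ((- v$1 + R) / d) \<union>
      Jint ((v$2 - R) / d) ((v$2 + R) / d) \<union> Jint ((- v$2 - R) / d) ((- v$2 + R) / d))"

lemma comp_close:
  assumes "norm (e - v) \<le> R \<or> norm (e + v) \<le> R"
  shows "\<bar>e$i - v$i\<bar> \<le> R \<or> \<bar>e$i - (- v$i)\<bar> \<le> R"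
proof -
  have "\<bar>(e - v)$i\<bar> \<le> norm (e - v)" "\<bar>(e + v)$i\<bar> \<le> norm (e + v)"
    by (rule component_le_norm_cart)+
  then show ?thesis using assms by auto
qed

lemma key_in_keys_near:
  assumes "norm (e - v) \<le> R \<or> norm (e + v) \<le> R" "d > 0"
  shows "key d e \<in> keys_near d v R"
proof -
  have "\<lfloor>e$1 / d\<rfloor> \<in> Jint ((v$1 - R) / d) ((v$1 + R) / d) \<union> Jint ((- v$1 - R) / d) ((- v$1 + R) / d)"
    using comp_close[OF assms(1), of 1] floor_in_Jint assms(2) by blast
  moreover have "\<lfloor>e$2 / d\<rfloor> \<in> Jint ((v$2 - R) / d) ((v$2 + R) / d) \<union> Jint ((- v$2 - R) / d) ((- v$2 + R) / d)"
    using comp_close[OF assms(1), of 2] floor_in_Jint assms(2) by blast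
  ultimately show ?thesis unfolding keys_near_def key_def by auto
qed

lemma card_union4_le:
  assumes "finite A" "finite B" "finite C" "finite D"
  shows "card (A \<union> B \<union> C \<union> D) \<le> card A + card B + card C + card D"
proof -
  have "card (A \<union> B \<union> C \<union> D) \<le> card (A \<union> B \<union> C) + card D" by (rule card_Un_le)
  moreover have "card (A \<union> B \<union> C) \<le> card (A \<union> B) + card C" by (rule card_Un_le)
  moreover have "card (A \<union> B) \<le> card A + card B" by (rule card_Un_le)
  ultimately show ?thesis by linarith
qed

lemma sum4_le: "(a::real) \<le> X \<Longrightarrow> b \<le> X \<Longrightarrow> c \<le> X \<Longrightarrow> e \<le> X \<Longrightarrow> a + b + c + e \<le> 4 * X"
  by linarith

lemma card_keys_near:
  assumes "R \<ge> 0" "d > 0"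
  shows "real (card (keys_near d v R)) \<le> 32 * R / d + 32"
proof -
  define S where "S = Jint ((v$1 - R) / d) ((v$1 + R) / d) \<union> Jint ((- v$1 - R) / d) ((- v$1 + R) / d) \<union>
      Jint ((v$2 - R) / d) ((v$2 + R) / d) \<union> Jint ((- v$2 - R) / d) ((- v$2 + R) / d)"
  have le: "(c - R) / d \<le> (c + R) / d" for c using assms by (auto intro!: divide_right_mono)
  have each: "real (card (Jint ((c - R) / d) ((c + R) / d))) \<le> 2 * R / d + 2" for c
  proof -
    have "real (card (Jint ((c - R) / d) ((c + R) / d))) \<le> (c + R) / d - (c - R) / d + 2"
      by (rule card_Jint[OF le])
    also have "(c + R) / d - (c - R) / d = ((c + R) - (c - R)) / d" by (rule diff_divide_distrib[symmetric])
    also have "\<dots> = 2 * R / d" by simp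
    finally show ?thesis .
  qed
  have fin: "finite (Jint lo hi)" for lo hi by (simp add: Jint_def)
  have "card S \<le> card (Jint ((v$1 - R) / d) ((v$1 + R) / d)) + card (Jint ((- v$1 - R) / d) ((- v$1 + R) / d)) +
      card (Jint ((v$2 - R) / d) ((v$2 + R) / d)) + card (Jint ((- v$2 - R) / d) ((- v$2 + R) / d))"
    unfolding S_def by (rule card_union4_le) (simp_all add: fin)
  then have "real (card S) \<le> real (card (Jint ((v$1 - R) / d) ((v$1 + R) / d))) + real (card (Jint ((- v$1 - R) / d) ((- v$1 + R) / d))) +
      real (card (Jint ((v$2 - R) / d) ((v$2 + R) / d))) + real (card (Jint ((- v$2 - R) / d) ((- v$2 + R) / d)))"
    by linarith
  also have "\<dots> \<le> 4 * (2 * R / d + 2)" by (rule sum4_le[OF each each each each])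
  finally have cS: "real (card S) \<le> 4 * (2 * R / d + 2)" .
  have "card (keys_near d v R) = 4 * card S"
    unfolding keys_near_def S_def[symmetric] by (simp add: card_cartesian_product)
  then show ?thesis using cS by simp
qed

definition all_keys :: "real \<Rightarrow> (bool \<times> bool \<times> int) set" where
  "all_keys d = UNIV \<times> UNIV \<times> Jint (-1/d) (1/d)"

lemma finite_all_keys: "finite (all_keys d)"
  by (simp add: all_keys_def Jint_def)

lemma key_in_all_keys:
  assumes "norm e = 1" "d > 0"
  shows "key d e \<in> all_keys d"
proof -
  have "\<bar>e$i\<bar> \<le> 1" for i using component_le_norm_cart[of e i] assms by simp
  then have "\<bar>e$i - 0\<bar> \<le> 1" for i by simp
  then have "\<lfloor>e$i / d\<rfloor> \<in> Jint ((0 - 1) / d) ((0 + 1) / d)" for i using floor_in_Jint assms(2) by blast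
  then show ?thesis unfolding all_keys_def key_def by auto
qed

lemma cont_le_keys:
  assumes "M \<subseteq> sphere 0 1" "d > 0" "0 < b"
  shows "cont b M \<le> ennreal (real (card (key d ` M)) * (2 * d) powr b)"
proof -
  have fin: "finite (key d ` M)"
    by (rule finite_subset[OF _ finite_all_keys[of d]]) (use assms key_in_all_keys in auto)
  have cov: "M \<subseteq> (\<Union>k\<in>key d ` M. {e\<in>M. key d e = k})" by auto
  have bd: "bounded {e\<in>M. key d e = k}" for k
    by (rule bounded_subset[OF bounded_sphere[of 0 1]]) (use assms in auto)
  have "cont b M \<le> (\<Sum>k\<in>key d ` M. ennreal (diameter {e\<in>M. key d e = k} powr b))"
    by (rule cont_finite_cover[OF fin cov bd])
  also have "\<dots> \<le> (\<Sum>k\<in>key d ` M. ennreal ((2 * d) powr b))"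
  proof (rule sum_mono)
    fix k assume "k \<in> key d ` M"
    have "diameter {e\<in>M. key d e = k} \<le> 2 * d"
    proof (rule diameter_le)
      show "{e\<in>M. key d e = k} \<noteq> {} \<or> 0 \<le> 2 * d" using assms by simp
      fix x y assume "x \<in> {e\<in>M. key d e = k}" "y \<in> {e\<in>M. key d e = k}"
      then have "norm x = 1" "norm y = 1" "key d x = key d y" using assms(1) by auto
      then show "norm (x - y) \<le> 2 * d" using key_close[of x y d] assms(2) by (simp add: dist_norm)
    qed
    then show "ennreal (diameter {e\<in>M. key d e = k} powr b) \<le> ennreal ((2 * d) powr b)"
      using assms diameter_ge_0[OF bd[of k]] by (intro ennreal_leI powr_mono2) auto
  qed
  also have "\<dots> = ennreal (real (card (key d ` M)) * (2 * d) powr b)"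
    by (simp add: ennreal_of_nat_eq_real_of_nat ennreal_mult)
  finally show ?thesis .
qed



lemma seg_param:
  assumes "x \<in> closed_segment a (a + t *\<^sub>R e)"
  shows "\<exists>u. 0 \<le> u \<and> u \<le> 1 \<and> x = a + (u * t) *\<^sub>R e"
proof -
  obtain u where u: "0 \<le> u" "u \<le> 1" "x = (1 - u) *\<^sub>R a + u *\<^sub>R (a + t *\<^sub>R e)"
    using assms unfolding in_segment by blast
  have "x = a + (u * t) *\<^sub>R e" using u(3) by (simp add: algebra_simps)
  then show ?thesis using u(1,2) by blast
qed

lemma inv_diff_abs: "(a::real) > 0 \<Longrightarrow> b > 0 \<Longrightarrow> \<bar>inverse a - inverse b\<bar> * b = \<bar>b - a\<bar> / a"
proof -
  assume a: "a > 0" and b: "b > 0"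
  have "(inverse a - inverse b) * b = (b - a) / a" using a b by (simp add: field_simps)
  then have "\<bar>inverse a - inverse b\<bar> * b = \<bar>(b - a) / a\<bar>" using b by (metis abs_mult abs_of_pos)
  also have "\<dots> = \<bar>b - a\<bar> / a" using a by simp
  finally show ?thesis .
qed

lemma normalize_close:
  fixes w u :: "'a::real_normed_vector"
  assumes "w \<noteq> 0"
  shows "norm (w /\<^sub>R norm w - u /\<^sub>R norm u) \<le> 2 * norm (w - u) / norm w"
proof (cases "u = 0")
  case True
  then show ?thesis using assms by simp
next
  case False
  have nw: "norm w > 0" using assms by simp
  have nu: "norm u > 0" using False by simp
  have "w /\<^sub>R norm w - u /\<^sub>R norm u = (w - u) /\<^sub>R norm w + (u /\<^sub>R norm w - u /\<^sub>R norm u)"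
    by (simp add: algebra_simps)
  then have "norm (w /\<^sub>R norm w - u /\<^sub>R norm u) \<le> norm ((w - u) /\<^sub>R norm w) + norm (u /\<^sub>R norm w - u /\<^sub>R norm u)"
    by (metis norm_triangle_ineq)
  also have "norm ((w - u) /\<^sub>R norm w) = norm (w - u) / norm w" using nw by (simp add: divide_inverse mult.commute)
  also have "u /\<^sub>R norm w - u /\<^sub>R norm u = (inverse (norm w) - inverse (norm u)) *\<^sub>R u"
    by (simp add: scaleR_diff_left)
  also have "norm \<dots> = \<bar>inverse (norm w) - inverse (norm u)\<bar> * norm u" by simp
  also have "\<bar>inverse (norm w) - inverse (norm u)\<bar> * norm u = \<bar>norm u - norm w\<bar> / norm w"
    by (rule inv_diff_abs[OF nw nu])
  also have "\<bar>norm u - norm w\<bar> \<le> norm (w - u)"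
    using norm_triangle_ineq3[of u w] by (simp add: norm_minus_commute)
  then have "\<bar>norm u - norm w\<bar> / norm w \<le> norm (w - u) / norm w" using nw by (simp add: divide_right_mono)
  then have "norm (w - u) / norm w + \<bar>norm u - norm w\<bar> / norm w \<le> 2 * norm (w - u) / norm w"
    by simp
  finally show ?thesis .
qed

lemma pair_direction:
  fixes e a x x' y y' :: "real^2"
  assumes e: "norm e = 1" and x: "x \<in> closed_segment a (a + t *\<^sub>R e)"
    and x': "x' \<in> closed_segment a (a + t *\<^sub>R e)"
    and r: "0 < r" "r \<le> dist x x'" and dy: "dist x y \<le> d" "dist x' y' \<le> d"
  shows "norm (e - (y' - y) /\<^sub>R norm (y' - y)) \<le> 4 * d / r \<or>
         norm (e + (y' - y) /\<^sub>R norm (y' - y)) \<le> 4 * d / r"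
proof -
  obtain s where s: "x = a + s *\<^sub>R e" using seg_param[OF x] by blast
  obtain s' where s': "x' = a + s' *\<^sub>R e" using seg_param[OF x'] by blast
  define w where "w = x' - x"
  define v where "v = (y' - y) /\<^sub>R norm (y' - y)"
  have w: "w = (s' - s) *\<^sub>R e" unfolding w_def s s' by (simp add: algebra_simps)
  have nw: "norm w = \<bar>s' - s\<bar>" unfolding w using e by simp
  have nw2: "norm w = dist x x'" unfolding w_def by (simp add: dist_norm norm_minus_commute)
  then have rw: "r \<le> norm w" using r by simp
  then have w0: "w \<noteq> 0" using r by auto
  have wu: "norm (w - (y' - y)) \<le> 2 * d"
  proof -
    have "w - (y' - y) = (x' - y') - (x - y)" unfolding w_def by (simp add: algebra_simps)
    then have "norm (w - (y' - y)) \<le> norm (x' - y') + norm (x - y)"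
      by (metis norm_triangle_ineq4)
    also have "\<dots> \<le> 2 * d" using dy by (simp add: dist_norm)
    finally show ?thesis .
  qed
  have "norm (w /\<^sub>R norm w - v) \<le> 2 * norm (w - (y' - y)) / norm w"
    unfolding v_def by (rule normalize_close[OF w0])
  also have "\<dots> \<le> 2 * (2 * d) / norm w" using wu rw r by (simp add: divide_right_mono)
  also have "\<dots> \<le> 4 * d / r"
  proof -
    have "0 \<le> d" using dy by (metis dist_commute order_trans zero_le_dist)
    then show ?thesis using rw r by (simp add: frac_le)
  qed
  finally have main: "norm (w /\<^sub>R norm w - v) \<le> 4 * d / r" .
  show ?thesis
  proof (cases "0 < s' - s")
    case True
    then have "w /\<^sub>R norm w = e" unfolding nw w using e by simp
    then show ?thesis using main unfolding v_def by simp
  next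
    case False
    then have "s' - s < 0" using w0 w by (cases "s' - s = 0") auto
    then have "inverse (s - s') * (s' - s) = -1" by (simp add: field_simps)
    then have "w /\<^sub>R norm w = - e" unfolding nw w using e \<open>s' - s < 0\<close> by simp
    then have "norm (e + v) \<le> 4 * d / r" using main by (simp add: norm_minus_commute add.commute)
    then show ?thesis unfolding v_def by simp
  qed
qed



lemma seg_pos:
  fixes a e x :: "real^2"
  assumes e: "norm e = 1" and x: "x \<in> closed_segment a (a + t *\<^sub>R e)" and t: "0 \<le> t"
  shows "x = a + inner (x - a) e *\<^sub>R e" "0 \<le> inner (x - a) e" "inner (x - a) e \<le> t"
proof -
  obtain u where u: "0 \<le> u" "u \<le> 1" "x = (1 - u) *\<^sub>R a + u *\<^sub>R (a + t *\<^sub>R e)"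
    using x unfolding in_segment by blast
  have x2: "x = a + (u * t) *\<^sub>R e" using u(3) by (simp add: algebra_simps)
  have ee: "inner e e = 1" using e by (simp add: dot_square_norm)
  have p: "inner (x - a) e = u * t" unfolding x2 using ee by (simp add: inner_scaleR_left)
  show "x = a + inner (x - a) e *\<^sub>R e" using x2 p by simp
  show "0 \<le> inner (x - a) e" using p u t by simp
  show "inner (x - a) e \<le> t" using p u t by (simp add: mult_left_le_one_le)
qed

lemma seg_dist:
  fixes a e x y :: "real^2"
  assumes e: "norm e = 1" and x: "x \<in> closed_segment a (a + t *\<^sub>R e)"
    and y: "y \<in> closed_segment a (a + t *\<^sub>R e)" and t: "0 \<le> t"
  shows "dist x y = \<bar>inner (x - a) e - inner (y - a) e\<bar>"
proof -
  have "x - y = (inner (x - a) e - inner (y - a) e) *\<^sub>R e"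
    using seg_pos(1)[OF e x t] seg_pos(1)[OF e y t]
    by (metis (no_types, lifting) add_diff_cancel_left scaleR_diff_left)
  then show ?thesis using e by (simp add: dist_norm)
qed

lemma ennreal_sum4_contra:
  fixes A B C D :: ennreal
  assumes "ennreal tau \<le> A + B + C + D" "A < ennreal (tau/3)" "B \<le> ennreal (tau/6)" "C \<le> ennreal (tau/6)"
    "D < ennreal (tau/3)" "0 < tau"
  shows False
proof -
  obtain p where p: "A = ennreal p" "0 \<le> p" using assms(2) by (cases A rule: ennreal_cases) auto
  obtain q where q: "D = ennreal q" "0 \<le> q" using assms(5) by (cases D rule: ennreal_cases) auto
  obtain b where b: "B = ennreal b" "0 \<le> b" using assms(3) by (cases B rule: ennreal_cases) (auto simp: top_unique)
  obtain c where c: "C = ennreal c" "0 \<le> c" using assms(4) by (cases C rule: ennreal_cases) (auto simp: top_unique)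
  have "p < tau/3" using assms(2) p by (simp add: ennreal_less_iff)
  moreover have "q < tau/3" using assms(5) q by (simp add: ennreal_less_iff)
  moreover have "b \<le> tau/6" using assms(3) b assms(6) by (simp add: ennreal_le_iff)
  moreover have "c \<le> tau/6" using assms(4) c assms(6) by (simp add: ennreal_le_iff)
  moreover note sum0 = calculation
  have sum: "A + B + C + D = ennreal (p + b + c + q)" using p q b c by (simp add: ennreal_plus)
  have E: "ennreal tau \<le> ennreal (p + b + c + q)" using assms(1) by (simp only: sum)
  have nn: "0 \<le> p + b + c + q" using p q b c by simp
  have "tau \<le> p + b + c + q" using ennreal_le_iff[OF nn, of tau] E by blast
  with sum0 show False by linarith
qed

lemma split_segment:
  fixes a e :: "real^2"
  assumes e: "norm e = 1" and X: "X \<subseteq> closed_segment a (a + t *\<^sub>R e)" and t: "0 \<le> t"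
    and al: "0 < al" and tau: "0 < tau" and cX: "ennreal tau \<le> cont al X"
    and r: "0 < r" "r powr al \<le> tau / 6"
  shows "\<exists>XL XR. XL \<subseteq> X \<and> XR \<subseteq> X \<and> ennreal (tau/3) \<le> cont al XL \<and> ennreal (tau/3) \<le> cont al XR \<and>
           (\<forall>x\<in>XL. \<forall>y\<in>XR. r \<le> dist x y)"
proof -
  define pos where "pos x = inner (x - a) e" for x
  have posX: "0 \<le> pos x" "pos x \<le> t" if "x \<in> X" for x
    using seg_pos(2,3)[OF e _ t] X that unfolding pos_def by auto
  have distX: "dist x y = \<bar>pos x - pos y\<bar>" if "x \<in> X" "y \<in> X" for x y
    using seg_dist[OF e _ _ t] X that unfolding pos_def by auto
  define P where "P j = {x\<in>X. pos x < real j * r}" for j :: nat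
  have P0: "P 0 = {}" unfolding P_def using posX by force
  define N where "N = nat \<lceil>t / r\<rceil> + 1"
  have "t < real N * r"
  proof -
    have "t / r \<le> real (nat \<lceil>t / r\<rceil>)" by linarith
    then have "t / r < real N" unfolding N_def by simp
    then show ?thesis using r by (simp add: divide_less_eq)
  qed
  then have PN: "P N = X" unfolding P_def using posX by force
  have t3: "ennreal (tau/3) \<le> ennreal tau" by (rule ennreal_leI) (use tau in simp)
  have exN: "ennreal (tau/3) \<le> cont al (P N)" using order_trans[OF t3 cX] PN by simp
  define j0 where "j0 = (LEAST j. ennreal (tau/3) \<le> cont al (P j))"
  have j0: "ennreal (tau/3) \<le> cont al (P j0)" unfolding j0_def by (rule LeastI[of _ N]) (rule exN)
  have "j0 \<noteq> 0"
  proof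
    assume "j0 = 0"
    then have "ennreal (tau/3) \<le> 0" using j0 P0 by simp
    then show False using tau by simp
  qed
  then obtain m where m: "j0 = Suc m" using not0_implies_Suc by blast
  have cm: "cont al (P m) < ennreal (tau/3)"
    using not_less_Least[of m "\<lambda>j. ennreal (tau/3) \<le> cont al (P j)"] m unfolding j0_def by auto
  define Q1 where "Q1 = {x\<in>X. real m * r \<le> pos x \<and> pos x < (real m + 1) * r}"
  define Q2 where "Q2 = {x\<in>X. (real m + 1) * r \<le> pos x \<and> pos x < (real m + 2) * r}"
  define XR where "XR = {x\<in>X. (real m + 2) * r \<le> pos x}"
  have bX: "bounded X" by (rule bounded_subset[OF compact_imp_bounded[OF compact_segment] X])
  have cQ: "cont al Q \<le> ennreal (tau/6)" if Q: "Q \<subseteq> X" "\<And>x y. x \<in> Q \<Longrightarrow> y \<in> Q \<Longrightarrow> \<bar>pos x - pos y\<bar> \<le> r" for Q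
  proof -
    have bQ: "bounded Q" using bounded_subset[OF bX Q(1)] .
    have "diameter Q \<le> r"
    proof (rule diameter_le)
      show "Q \<noteq> {} \<or> 0 \<le> r" using r by simp
      fix x y assume "x \<in> Q" "y \<in> Q"
      then have "x \<in> X" "y \<in> X" "\<bar>pos x - pos y\<bar> \<le> r" using Q by auto
      then show "norm (x - y) \<le> r" using distX[of x y] by (simp add: dist_norm)
    qed
    then have "diameter Q powr al \<le> r powr al" using al diameter_ge_0[OF bQ] by (intro powr_mono2) auto
    then have "diameter Q powr al \<le> tau / 6" using r(2) by simp
    then show ?thesis using cont_le_diam[OF bQ, of al] by (metis ennreal_leI order_trans)
  qed
  have cQ1: "cont al Q1 \<le> ennreal (tau/6)" by (rule cQ) (auto simp: Q1_def distrib_right)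
  have cQ2: "cont al Q2 \<le> ennreal (tau/6)" by (rule cQ) (auto simp: Q2_def distrib_right)
  have "X \<subseteq> P m \<union> Q1 \<union> Q2 \<union> XR" unfolding P_def Q1_def Q2_def XR_def by auto
  then have "cont al X \<le> cont al (P m \<union> Q1 \<union> Q2 \<union> XR)" by (rule cont_mono)
  also have "\<dots> \<le> cont al (P m \<union> Q1 \<union> Q2) + cont al XR" by (rule cont_Un)
  also have "\<dots> \<le> cont al (P m \<union> Q1) + cont al Q2 + cont al XR" by (intro add_right_mono cont_Un)
  also have "\<dots> \<le> cont al (P m) + cont al Q1 + cont al Q2 + cont al XR" by (intro add_right_mono cont_Un)
  finally have tot: "ennreal tau \<le> cont al (P m) + cont al Q1 + cont al Q2 + cont al XR" using cX by simp
  have cXR: "ennreal (tau/3) \<le> cont al XR"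
  proof (rule ccontr)
    assume "\<not> ennreal (tau/3) \<le> cont al XR"
    then have "cont al XR < ennreal (tau/3)" by simp
    then show False using ennreal_sum4_contra[OF tot cm cQ1 cQ2 _ tau] by simp
  qed
  show ?thesis
  proof (intro exI conjI)
    show "P j0 \<subseteq> X" unfolding P_def by auto
    show "XR \<subseteq> X" unfolding XR_def by auto
    show "ennreal (tau/3) \<le> cont al (P j0)" by (rule j0)
    show "ennreal (tau/3) \<le> cont al XR" by (rule cXR)
    show "\<forall>x\<in>P j0. \<forall>y\<in>XR. r \<le> dist x y"
    proof (intro ballI)
      fix x y assume x: "x \<in> P j0" and y: "y \<in> XR"
      then have "pos x < (real m + 1) * r" "(real m + 2) * r \<le> pos y" "x \<in> X" "y \<in> X"
        unfolding P_def XR_def m by (auto simp: algebra_simps)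
      then show "r \<le> dist x y" using distX by (auto simp: algebra_simps)
    qed
  qed
qed



lemma card_filter_sum: "finite S \<Longrightarrow> real (card {p\<in>S. P p}) = (\<Sum>p\<in>S. if P p then 1 else 0)"
  by (simp add: sum.If_cases Int_def conj_commute)

lemma incidence:
  fixes I :: "nat set" and U :: "nat \<Rightarrow> (real^2) set" and M :: "(real^2) set"
    and A :: "real^2 \<Rightarrow> real^2" and T :: "real^2 \<Rightarrow> real"
  assumes I: "finite I"
    and U: "\<And>i. i \<in> I \<Longrightarrow> bounded (U i) \<and> U i \<noteq> {} \<and> diameter (U i) \<le> d"
    and d: "0 < d"
    and al: "0 < al"
    and M: "M \<subseteq> sphere 0 1"
    and T: "\<And>e. e \<in> M \<Longrightarrow> 0 \<le> T e"
    and cM: "\<And>e. e \<in> M \<Longrightarrow> ennreal tau \<le> cont al (closed_segment (A e) (A e + T e *\<^sub>R e) \<inter> (\<Union>i\<in>I. U i))"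
    and tau: "0 < tau" "tau \<le> 1"
    and r: "r = (tau/6) powr (1/al)"
  shows "real (card (key d ` M)) * (tau/3)^2 \<le> real (card I)^2 * (160 / r) * d powr (2*al)"
proof -
  have r0: "0 < r" using r tau by simp
  have r1: "r \<le> 1"
  proof -
    have "(tau/6) powr (1/al) \<le> 1 powr (1/al)" using tau al by (intro powr_mono2) auto
    then show ?thesis using r by simp
  qed
  have rp: "r powr al \<le> tau / 6"
  proof -
    have "r powr al = (tau/6) powr ((1/al) * al)" unfolding r by (rule powr_powr)
    also have "\<dots> = tau / 6" using al tau by simp
    finally show ?thesis by simp
  qed
  define seg where "seg e = closed_segment (A e) (A e + T e *\<^sub>R e)" for e
  have unit: "norm e = 1" if "e \<in> M" for e using M that by auto
  have ex: "\<exists>XL XR. XL \<subseteq> seg e \<inter> (\<Union>i\<in>I. U i) \<and> XR \<subseteq> seg e \<inter> (\<Union>i\<in>I. U i) \<and>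
      ennreal (tau/3) \<le> cont al XL \<and> ennreal (tau/3) \<le> cont al XR \<and> (\<forall>x\<in>XL. \<forall>y\<in>XR. r \<le> dist x y)"
    if e: "e \<in> M" for e
    unfolding seg_def
    by (rule split_segment[OF unit[OF e] _ T[OF e] al tau(1) cM[OF e] r0 rp]) auto
  then obtain XL XR where X: "\<And>e. e \<in> M \<Longrightarrow> XL e \<subseteq> seg e \<inter> (\<Union>i\<in>I. U i) \<and> XR e \<subseteq> seg e \<inter> (\<Union>i\<in>I. U i) \<and>
      ennreal (tau/3) \<le> cont al (XL e) \<and> ennreal (tau/3) \<le> cont al (XR e) \<and> (\<forall>x\<in>XL e. \<forall>y\<in>XR e. r \<le> dist x y)"
    by metis
  define IL where "IL e = {i\<in>I. U i \<inter> XL e \<noteq> {}}" for e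
  define IR where "IR e = {i\<in>I. U i \<inter> XR e \<noteq> {}}" for e
  have count: "tau / 3 \<le> real (card {i\<in>I. U i \<inter> Y \<noteq> {}}) * d powr al"
    if Y: "Y \<subseteq> (\<Union>i\<in>I. U i)" "ennreal (tau/3) \<le> cont al Y" for Y
  proof -
    have fin: "finite {i\<in>I. U i \<inter> Y \<noteq> {}}" using I by simp
    have "Y \<subseteq> (\<Union>i\<in>{i\<in>I. U i \<inter> Y \<noteq> {}}. U i)" using Y(1) by blast
    then have "cont al Y \<le> (\<Sum>i\<in>{i\<in>I. U i \<inter> Y \<noteq> {}}. ennreal (diameter (U i) powr al))"
      by (rule cont_finite_cover[OF fin]) (use U in auto)
    also have "\<dots> \<le> (\<Sum>i\<in>{i\<in>I. U i \<inter> Y \<noteq> {}}. ennreal (d powr al))"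
    proof (rule sum_mono)
      fix i assume "i \<in> {i\<in>I. U i \<inter> Y \<noteq> {}}"
      then have "bounded (U i)" "diameter (U i) \<le> d" using U by auto
      then show "ennreal (diameter (U i) powr al) \<le> ennreal (d powr al)"
        using al diameter_ge_0 by (intro ennreal_leI powr_mono2) auto
    qed
    also have "\<dots> = ennreal (real (card {i\<in>I. U i \<inter> Y \<noteq> {}}) * d powr al)"
      by (simp add: ennreal_of_nat_eq_real_of_nat ennreal_mult)
    finally have "ennreal (tau/3) \<le> ennreal (real (card {i\<in>I. U i \<inter> Y \<noteq> {}}) * d powr al)"
      using Y(2) by (rule order_trans[rotated])
    then show ?thesis by (simp add: ennreal_le_iff)
  qed
  have nL: "tau / 3 \<le> real (card (IL e)) * d powr al" if "e \<in> M" for e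
    unfolding IL_def using X[OF that] by (intro count) auto
  have nR: "tau / 3 \<le> real (card (IR e)) * d powr al" if "e \<in> M" for e
    unfolding IR_def using X[OF that] by (intro count) auto
  define K where "K = key d ` M"
  have finK: "finite K"
    unfolding K_def by (rule finite_subset[OF _ finite_all_keys[of d]]) (use key_in_all_keys unit d in auto)
  define rep where "rep k = (SOME e. e \<in> M \<and> key d e = k)" for k
  have rep: "rep k \<in> M" "key d (rep k) = k" if "k \<in> K" for k
  proof -
    have "\<exists>e. e \<in> M \<and> key d e = k" using that unfolding K_def by auto
    then have "rep k \<in> M \<and> key d (rep k) = k" unfolding rep_def by (rule someI_ex)
    then show "rep k \<in> M" "key d (rep k) = k" by auto
  qed
  define hit where "hit k p = (U (fst p) \<inter> XL (rep k) \<noteq> {} \<and> U (snd p) \<inter> XR (rep k) \<noteq> {})" for k p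
  define y where "y i = (SOME x. x \<in> U i)" for i
  have y: "y i \<in> U i" if "i \<in> I" for i
    unfolding y_def using U[OF that] by (simp add: some_in_eq)
  define KS where "KS p = keys_near d ((y (snd p) - y (fst p)) /\<^sub>R norm (y (snd p) - y (fst p))) (4 * d / r)" for p
  have hitKS: "k \<in> KS p" if k: "k \<in> K" and p: "p \<in> I \<times> I" and h: "hit k p" for k p
  proof -
    obtain i i' where p': "p = (i, i')" by fastforce
    have ii: "i \<in> I" "i' \<in> I" using p p' by auto
    define e where "e = rep k"
    have e: "e \<in> M" "key d e = k" using rep[OF k] unfolding e_def by auto
    obtain x where x: "x \<in> U i" "x \<in> XL e" using h unfolding hit_def p' e_def by auto
    obtain x' where x': "x' \<in> U i'" "x' \<in> XR e" using h unfolding hit_def p' e_def by auto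
    have xs: "x \<in> seg e" "x' \<in> seg e" using X[OF e(1)] x x' by auto
    have rx: "r \<le> dist x x'" using X[OF e(1)] x x' by auto
    have dy: "dist x (y i) \<le> d" "dist x' (y i') \<le> d"
      using diameter_bounded_bound[of "U i" x "y i"] diameter_bounded_bound[of "U i'" x' "y i'"]
        U[OF ii(1)] U[OF ii(2)] x x' y[OF ii(1)] y[OF ii(2)] by auto
    have "norm (e - (y i' - y i) /\<^sub>R norm (y i' - y i)) \<le> 4 * d / r \<or>
         norm (e + (y i' - y i) /\<^sub>R norm (y i' - y i)) \<le> 4 * d / r"
      by (rule pair_direction[OF unit[OF e(1)] xs[unfolded seg_def] r0 rx dy])
    then have "key d e \<in> keys_near d ((y i' - y i) /\<^sub>R norm (y i' - y i)) (4 * d / r)"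
      by (rule key_in_keys_near[OF _ d])
    then show ?thesis unfolding KS_def p' using e(2) by simp
  qed
  have cardKS: "real (card (KS p)) \<le> 160 / r" for p
  proof -
    have "real (card (KS p)) \<le> 32 * (4 * d / r) / d + 32"
      unfolding KS_def by (rule card_keys_near) (use d r0 in auto)
    also have "32 * (4 * d / r) / d = 128 / r" using d by simp
    also have "128 / r + 32 \<le> 160 / r" using r0 r1 by (simp add: field_simps)
    finally show ?thesis .
  qed
  have eqset: "{p\<in>I\<times>I. hit k p} = IL (rep k) \<times> IR (rep k)" for k
    unfolding hit_def IL_def IR_def by auto
  have "(\<Sum>k\<in>K. real (card (IL (rep k))) * real (card (IR (rep k))))
      = (\<Sum>k\<in>K. real (card {p\<in>I\<times>I. hit k p}))"
    by (simp add: eqset card_cartesian_product)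
  also have "\<dots> = (\<Sum>k\<in>K. \<Sum>p\<in>I\<times>I. if hit k p then 1 else 0)"
    using I by (simp add: card_filter_sum)
  also have "\<dots> = (\<Sum>p\<in>I\<times>I. \<Sum>k\<in>K. if hit k p then 1 else 0)"
    by (rule sum.swap)
  also have "\<dots> = (\<Sum>p\<in>I\<times>I. real (card {k\<in>K. hit k p}))"
    using finK by (simp add: card_filter_sum)
  also have "\<dots> \<le> (\<Sum>p\<in>I\<times>I. 160 / r)"
  proof (rule sum_mono)
    fix p assume p: "p \<in> I \<times> I"
    have "{k\<in>K. hit k p} \<subseteq> KS p" using hitKS p by auto
    then have "card {k\<in>K. hit k p} \<le> card (KS p)"
      by (rule card_mono[rotated]) (simp add: KS_def keys_near_def Jint_def)
    then show "real (card {k\<in>K. hit k p}) \<le> 160 / r" using cardKS[of p] by linarith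
  qed
  also have "\<dots> = real (card I)^2 * (160 / r)"
    by (simp add: card_cartesian_product power2_eq_square)
  finally have upper: "(\<Sum>k\<in>K. real (card (IL (rep k))) * real (card (IR (rep k)))) \<le> real (card I)^2 * (160 / r)" .
  have dpos: "0 < d powr al" using d by simp
  have "(\<Sum>k\<in>K. (tau/3)^2) \<le> (\<Sum>k\<in>K. (real (card (IL (rep k))) * d powr al) * (real (card (IR (rep k))) * d powr al))"
  proof (rule sum_mono)
    fix k assume k: "k \<in> K"
    have a: "tau/3 \<le> real (card (IL (rep k))) * d powr al" using nL rep(1)[OF k] .
    have b: "tau/3 \<le> real (card (IR (rep k))) * d powr al" using nR rep(1)[OF k] .
    show "(tau/3)^2 \<le> (real (card (IL (rep k))) * d powr al) * (real (card (IR (rep k))) * d powr al)"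
      unfolding power2_eq_square by (rule mult_mono[OF a b]) (use tau in auto)
  qed
  also have "\<dots> = (\<Sum>k\<in>K. (real (card (IL (rep k))) * real (card (IR (rep k)))) * (d powr al)^2)"
    by (rule sum.cong) (simp_all add: power2_eq_square algebra_simps)
  also have "\<dots> = (\<Sum>k\<in>K. real (card (IL (rep k))) * real (card (IR (rep k)))) * (d powr al)^2"
    by (rule sum_distrib_right[symmetric])
  also have "\<dots> \<le> real (card I)^2 * (160 / r) * (d powr al)^2"
    by (rule mult_right_mono[OF upper]) simp
  finally have "real (card K) * (tau/3)^2 \<le> real (card I)^2 * (160 / r) * (d powr al)^2" by simp
  moreover have "(d powr al)^2 = d powr (2*al)"
    using d by (simp add: power2_eq_square powr_add[symmetric])
  ultimately show ?thesis unfolding K_def by simp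
qed



lemma sq_powr: "(x::real) powr a * x powr a = x powr (2*a)"
  by (metis mult_2 powr_add)

lemma key_arith:
  fixes al be th C c n m H :: real and k :: nat
  assumes al: "0 < al" and be: "0 < be" and C: "0 < C" and c: "0 < c"
    and H: "C * (2 powr (-(real k + 1))) powr (be / 2 + al) * (ln (1 / 2 powr (-(real k + 1)))) powr th \<le> H"
    and n: "0 \<le> n" and m: "0 \<le> m" "m \<le> 2"
    and bound: "m \<le> n^2 * (160 / ((c * (real k + 1) powr (- (th / (1 + 1/(2*al)))) / 6) powr (1/al)))
        * (2 powr (- real k)) powr (2*al) * (2 * 2 powr (- real k)) powr be
        / (c * (real k + 1) powr (- (th / (1 + 1/(2*al)))) / 3)^2"
  shows "sqrt (C^2 * 2 powr (-(2*al+be)) * (ln 2) powr (2*th) * c powr (2 * (1 + 1/(2*al)))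
           / (2880 * 2 powr be * 6 powr (1/al))) * m \<le> n * H"
proof -
  define p where "p = 1 + 1/(2*al)"
  define K1 where "K1 = real k + 1"
  have K1: "0 < K1" unfolding K1_def by simp
  define t where "t = c * K1 powr (- (th / p))"
  have "0 < 1 / (2*al)" using al by simp
  then have p0: "0 < p" unfolding p_def by linarith
  have t0: "0 < t" unfolding t_def using c K1 by simp
  define kap2 where "kap2 = C^2 * 2 powr (-(2*al+be)) * (ln 2) powr (2*th) * c powr (2 * p)
           / (2880 * 2 powr be * 6 powr (1/al))"
  have kap0: "0 \<le> kap2" unfolding kap2_def by simp
  define G where "G = C^2 * 2 powr (-(2*al+be)) * (ln 2) powr (2*th) * (2 powr (- real k * (2*al+be)) * K1 powr (2*th))"
  define Phi where "Phi = (160 / ((t / 6) powr (1/al))) * (2 powr (- real k)) powr (2*al) * (2 * 2 powr (- real k)) powr be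
        / (t / 3)^2"
  have bound': "m \<le> n^2 * Phi" using bound unfolding Phi_def t_def p_def K1_def by (simp add: mult.assoc)
  have tp: "t powr (2 * p) = c powr (2*p) * K1 powr (- 2 * th)"
  proof -
    have "t powr (2*p) = c powr (2*p) * (K1 powr (- (th / p))) powr (2*p)"
      unfolding t_def using c K1 by (simp add: powr_mult)
    also have "(K1 powr (- (th / p))) powr (2*p) = K1 powr (- 2 * th)"
      using p0 by (simp add: powr_powr mult.commute)
    finally show ?thesis .
  qed
  have t2: "(t / 3)^2 * (t / 6) powr (1/al) = t powr (2*p) / (9 * 6 powr (1/al))"
  proof -
    have "(t / 6) powr (1/al) = t powr (1/al) / 6 powr (1/al)" using t0 by (simp add: powr_divide)
    moreover have "(t/3)^2 = t powr 2 / 9" using t0 by (simp add: power2_eq_square powr_numeral)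
    moreover have "t powr 2 * t powr (1/al) = t powr (2*p)"
    proof -
      have e: "2*p = 2 + 1/al" unfolding p_def using al by (simp add: field_simps)
      show ?thesis unfolding e by (rule powr_add[symmetric])
    qed
    ultimately show ?thesis by (simp add: field_simps)
  qed
  have dd: "(2 powr (- real k)) powr (2*al) * (2 * 2 powr (- real k)) powr be
      = 2 powr be * 2 powr (- real k * (2*al+be))"
  proof -
    have "(2 powr (- real k)) powr (2*al) = 2 powr (- real k * (2*al))" by (simp add: powr_powr)
    moreover have "(2 * 2 powr (- real k)) powr be = 2 powr be * 2 powr (- real k * be)"
      by (simp add: powr_mult powr_powr)
    ultimately show ?thesis by (simp add: powr_add[symmetric] algebra_simps)
  qed
  have Phi_eq: "2 * Phi = 2880 * 6 powr (1/al) * 2 powr be * 2 powr (- real k * (2*al+be)) * K1 powr (2*th) / c powr (2*p)"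
  proof -
    have "Phi = 160 * (2 powr be * 2 powr (- real k * (2*al+be))) / ((t / 3)^2 * (t / 6) powr (1/al))"
      unfolding Phi_def dd[symmetric] by (simp add: field_simps)
    also have "\<dots> = 160 * (2 powr be * 2 powr (- real k * (2*al+be))) * (9 * 6 powr (1/al)) / t powr (2*p)"
      unfolding t2 by simp
    also have "\<dots> = 160 * (2 powr be * 2 powr (- real k * (2*al+be))) * (9 * 6 powr (1/al)) * K1 powr (2*th) / c powr (2*p)"
      unfolding tp using K1 by (simp add: powr_minus field_simps)
    finally show ?thesis by (simp add: field_simps)
  qed
  have kapPhi: "kap2 * (2 * Phi) = G"
    unfolding Phi_eq kap2_def G_def using c by (simp add: field_simps)
  have lnx: "ln (1 / 2 powr (-(real k + 1))) = K1 * ln 2"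
  proof -
    have "1 / 2 powr (-(real k + 1)) = 2 powr (real k + 1)" unfolding powr_minus by (simp only: divide_inverse inverse_inverse_eq mult_1)
    then show ?thesis unfolding K1_def by (simp add: ln_powr)
  qed
  have xs: "(2 powr (-(real k + 1))) powr (be / 2 + al) = 2 powr (-(2*al+be)/2) * 2 powr (- real k * (2*al+be) / 2)"
  proof -
    have ex: "-(real k + 1) * (be / 2 + al) = -(2*al+be)/2 + - real k * (2*al+be) / 2"
      by (simp add: field_simps)
    have "(2 powr (-(real k + 1))) powr (be / 2 + al) = 2 powr (-(real k + 1) * (be / 2 + al))"
      by (rule powr_powr)
    also have "\<dots> = 2 powr (-(2*al+be)/2 + - real k * (2*al+be) / 2)" by (simp only: ex)
    also have "\<dots> = 2 powr (-(2*al+be)/2) * 2 powr (- real k * (2*al+be) / 2)" by (rule powr_add)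
    finally show ?thesis .
  qed
  have Hlow: "sqrt G \<le> H"
  proof -
    have "G = (C * (2 powr (-(2*al+be)/2) * 2 powr (- real k * (2*al+be) / 2)) * (K1 * ln 2) powr th)^2"
    proof -
      have a: "(2 powr (-(2*al+be)/2))^2 = 2 powr (-(2*al+be))"
        by (simp add: power2_eq_square powr_add[symmetric])
      have b: "(2 powr (- real k * (2*al+be) / 2))^2 = 2 powr (- real k * (2*al+be))"
        by (simp add: power2_eq_square powr_add[symmetric])
      have cc: "((K1 * ln 2) powr th)^2 = K1 powr (2*th) * (ln 2) powr (2*th)"
        using K1 by (simp add: power2_eq_square powr_mult sq_powr algebra_simps)
      show ?thesis unfolding G_def power_mult_distrib a b cc by (simp add: algebra_simps)
    qed
    then have "sqrt G = \<bar>C * (2 powr (-(2*al+be)/2) * 2 powr (- real k * (2*al+be) / 2)) * (K1 * ln 2) powr th\<bar>"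
      by simp
    also have "\<dots> = C * (2 powr (-(2*al+be)/2) * 2 powr (- real k * (2*al+be) / 2)) * (K1 * ln 2) powr th"
      using C by simp
    also have "\<dots> \<le> H" using H unfolding lnx xs .
    finally show ?thesis .
  qed
  have G0: "0 \<le> G" unfolding G_def by simp
  have "(sqrt kap2 * m)^2 \<le> (n * H)^2"
  proof -
    have "(sqrt kap2 * m)^2 = kap2 * m^2" using kap0 by (simp add: power_mult_distrib)
    also have "\<dots> \<le> kap2 * (2 * m)"
    proof (rule mult_left_mono)
      have "m * m \<le> 2 * m" using mult_right_mono[OF m(2) m(1)] .
      then show "m^2 \<le> 2 * m" by (simp only: power2_eq_square)
    qed (rule kap0)
    also have "\<dots> \<le> kap2 * (2 * (n^2 * Phi))" using bound' kap0 by (intro mult_left_mono) auto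
    also have "\<dots> = n^2 * G" using kapPhi by (simp add: algebra_simps)
    also have "\<dots> \<le> n^2 * H^2"
    proof -
      have "(sqrt G)^2 \<le> H^2" by (rule power_mono[OF Hlow]) (simp add: G0)
      then have "G \<le> H^2" using G0 by simp
      then show ?thesis by (intro mult_left_mono) auto
    qed
    finally show ?thesis by (simp add: power_mult_distrib)
  qed
  moreover have "0 \<le> n * H"
  proof -
    have "0 \<le> sqrt G" using G0 by simp
    then have "0 \<le> H" using Hlow by (rule order_trans)
    then show ?thesis using n by simp
  qed
  ultimately have "sqrt kap2 * m \<le> n * H" by (rule power2_le_imp_le)
  then show ?thesis unfolding kap2_def p_def .
qed



lemma cont_sphere_le2:
  assumes "M \<subseteq> sphere (0::real^2) 1" "0 < be" "be \<le> 1"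
  shows "cont be M \<le> ennreal 2"
proof -
  have bM: "bounded M" by (rule bounded_subset[OF bounded_sphere assms(1)])
  have "diameter M \<le> 2"
  proof (rule diameter_le)
    show "M \<noteq> {} \<or> 0 \<le> (2::real)" by simp
    fix x y assume "x \<in> M" "y \<in> M"
    then have "norm x = 1" "norm y = 1" using assms(1) by auto
    then show "norm (x - y) \<le> 2" using norm_triangle_ineq4[of x y] by simp
  qed
  then have "diameter M powr be \<le> 2 powr be" using assms diameter_ge_0[OF bM] by (intro powr_mono2) auto
  also have "2 powr be \<le> 2 powr 1" using assms by (intro powr_mono) auto
  finally have "diameter M powr be \<le> 2" by simp
  then show ?thesis using cont_le_diam[OF bM, of be] by (metis ennreal_leI order_trans)
qed

lemma level_bound:
  fixes I :: "nat set" and U :: "nat \<Rightarrow> (real^2) set" and M :: "(real^2) set"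
    and A :: "real^2 \<Rightarrow> real^2" and T :: "real^2 \<Rightarrow> real" and k :: nat
  assumes I: "finite I"
    and U: "\<And>i. i \<in> I \<Longrightarrow> bounded (U i) \<and> U i \<noteq> {} \<and> diameter (U i) \<le> 2 powr (- real k)"
    and al: "0 < al" and be: "0 < be" "be \<le> 1"
    and M: "M \<subseteq> sphere 0 1"
    and T: "\<And>e. e \<in> M \<Longrightarrow> 0 \<le> T e"
    and cM: "\<And>e. e \<in> M \<Longrightarrow> ennreal (c * (real k + 1) powr (- (th / (1 + 1/(2*al)))))
                 \<le> cont al (closed_segment (A e) (A e + T e *\<^sub>R e) \<inter> (\<Union>i\<in>I. U i))"
    and c: "0 < c" and t1: "c * (real k + 1) powr (- (th / (1 + 1/(2*al)))) \<le> 1"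
    and C: "0 < C"
    and H: "C * (2 powr (-(real k + 1))) powr (be / 2 + al) * (ln (1 / 2 powr (-(real k + 1)))) powr th \<le> H"
  shows "sqrt (C^2 * 2 powr (-(2*al+be)) * (ln 2) powr (2*th) * c powr (2 * (1 + 1/(2*al)))
           / (2880 * 2 powr be * 6 powr (1/al))) * enn2real (cont be M) \<le> real (card I) * H"
proof -
  define t where "t = c * (real k + 1) powr (- (th / (1 + 1/(2*al))))"
  define d where "d = 2 powr (- real k)"
  define r where "r = (t/6) powr (1/al)"
  have t0: "0 < t" unfolding t_def using c by simp
  have d0: "0 < d" unfolding d_def by simp
  have r0: "0 < r" unfolding r_def using t0 by simp
  have le2: "cont be M \<le> ennreal 2" by (rule cont_sphere_le2[OF M be])
  define m where "m = enn2real (cont be M)"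
  have m0: "0 \<le> m" unfolding m_def by simp
  have cm: "cont be M = ennreal m" unfolding m_def using le2
    by (metis enn2real_eq_0_iff ennreal_enn2real_if ennreal_neq_top neq_top_trans)
  have m2: "m \<le> 2" unfolding m_def using enn2real_mono[OF le2] by simp
  have keys: "cont be M \<le> ennreal (real (card (key d ` M)) * (2 * d) powr be)"
    by (rule cont_le_keys[OF M d0 be(1)])
  then have mk: "m \<le> real (card (key d ` M)) * (2 * d) powr be" unfolding cm
    by (simp add: ennreal_le_iff)
  have inc: "real (card (key d ` M)) * (t/3)^2 \<le> real (card I)^2 * (160 / r) * d powr (2*al)"
    by (rule incidence[where I=I and U=U and M=M and A=A and T=T and d=d and al=al and tau=t and r=r, OF I _ d0 al M T _ t0 _ r_def])
       (use U cM t1 in \<open>auto simp: d_def t_def\<close>)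
  have ck: "real (card (key d ` M)) \<le> real (card I)^2 * (160 / r) * d powr (2*al) / (t/3)^2"
  proof -
    have t3: "0 < (t/3)^2" using t0 by simp
    show ?thesis by (simp only: pos_le_divide_eq[OF t3]) (rule inc)
  qed
  have "m \<le> real (card I)^2 * (160 / r) * d powr (2*al) / (t/3)^2 * (2 * d) powr be"
    using mk ck by (meson mult_right_mono order_trans powr_ge_zero)
  then have bound: "m \<le> (real (card I))^2 * (160 / r) * d powr (2*al) * (2 * d) powr be / (t/3)^2"
    by (simp add: field_simps)
  show ?thesis
    unfolding m_def[symmetric]
    by (rule key_arith[OF al be(1) C c H _ m0 m2]) (use bound in \<open>simp_all add: t_def d_def r_def\<close>)
qed



lemma cover_of_zero:
  fixes E :: "(real^2) set"
  assumes E0: "hausdorff_h h E = 0" and d: "0 < d" and ep: "0 < ep" and h: "h \<in> gauge_class"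
  shows "\<exists>U. E \<subseteq> (\<Union>i. U i) \<and> (\<forall>i. bounded (U i) \<and> diameter (U i) < d) \<and>
             summable (\<lambda>i. h (diameter (U i))) \<and> (\<Sum>i. h (diameter (U i))) < ep"
proof -
  have "(INF U\<in>{U :: nat \<Rightarrow> (real^2) set. E \<subseteq> (\<Union>i. U i) \<and> (\<forall>i. bounded (U i) \<and> diameter (U i) < d)}.
                 (\<Sum>i. ennreal (h (diameter (U i))))) \<le> hausdorff_h h E"
    unfolding hausdorff_h_def by (rule SUP_upper) (use d in simp)
  then have "(INF U\<in>{U :: nat \<Rightarrow> (real^2) set. E \<subseteq> (\<Union>i. U i) \<and> (\<forall>i. bounded (U i) \<and> diameter (U i) < d)}.
                 (\<Sum>i. ennreal (h (diameter (U i))))) < ennreal ep"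
    using E0 ep by simp
  then obtain U where U: "E \<subseteq> (\<Union>i. U i)" "\<And>i. bounded (U i)" "\<And>i. diameter (U i) < d"
      "(\<Sum>i. ennreal (h (diameter (U i)))) < ennreal ep"
    unfolding INF_less_iff by blast
  have hn: "0 \<le> h (diameter (U i))" for i
    using h diameter_ge_0[OF U(2)] unfolding gauge_class_def by blast
  have sm: "summable (\<lambda>i. h (diameter (U i)))"
    by (rule summable_suminf_not_top[OF hn]) (use U(4) in auto)
  have "ennreal (\<Sum>i. h (diameter (U i))) < ennreal ep"
    using U(4) suminf_ennreal2[OF hn sm] by simp
  then have "(\<Sum>i. h (diameter (U i))) < ep"
    using ennreal_less_iff[OF suminf_nonneg[OF sm hn]] by blast
  then show ?thesis using U sm by blast
qed

lemma level_props:
  fixes D :: real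
  assumes D: "0 < D" "D < 2 powr (- real k1)"
  shows "k1 \<le> nat \<lfloor>log 2 (1/D)\<rfloor>" "D \<le> 2 powr (- real (nat \<lfloor>log 2 (1/D)\<rfloor>))"
    "2 powr (- (real (nat \<lfloor>log 2 (1/D)\<rfloor>) + 1)) < D"
proof -
  define q where "q = log 2 (1/D)"
  have "1/D > 2 powr (real k1)"
  proof -
    have "1 / 2 powr (- real k1) < 1/D" using D by (simp add: frac_less2)
    then show ?thesis unfolding powr_minus by (simp only: divide_inverse inverse_inverse_eq mult_1)
  qed
  then have "log 2 (2 powr real k1) < log 2 (1/D)"
    by (subst log_less_cancel_iff) (use D in auto)
  then have qk: "real k1 < q" unfolding q_def by simp
  then have q0: "0 \<le> q" by simp
  have fl: "real (nat \<lfloor>q\<rfloor>) = of_int \<lfloor>q\<rfloor>" using q0 by simp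
  show "k1 \<le> nat \<lfloor>log 2 (1/D)\<rfloor>" using qk unfolding q_def[symmetric] by linarith
  have pq: "2 powr q = 1/D" unfolding q_def using D by simp
  have "2 powr (real (nat \<lfloor>q\<rfloor>)) \<le> 2 powr q" unfolding fl by (intro powr_mono) auto
  then have "2 powr (real (nat \<lfloor>q\<rfloor>)) \<le> 1/D" using pq by simp
  then have "D \<le> 1 / 2 powr (real (nat \<lfloor>q\<rfloor>))" using D by (simp add: field_simps)
  then show "D \<le> 2 powr (- real (nat \<lfloor>log 2 (1/D)\<rfloor>))" unfolding q_def[symmetric] by (simp add: powr_minus divide_inverse)
  have "2 powr q < 2 powr (real (nat \<lfloor>q\<rfloor>) + 1)" unfolding fl by (intro powr_less_mono) linarith+
  then have "1/D < 2 powr (real (nat \<lfloor>q\<rfloor>) + 1)" using pq by simp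
  then have "1 / 2 powr (real (nat \<lfloor>q\<rfloor>) + 1) < D" using D by (simp add: field_simps)
  then show "2 powr (- (real (nat \<lfloor>log 2 (1/D)\<rfloor>) + 1)) < D" unfolding q_def[symmetric] powr_minus
    by (simp only: divide_inverse mult_1)
qed



theorem corollary4p4:
  fixes \<alpha> \<beta> \<theta> C :: real and E :: "(real^2) set" and h :: "real \<Rightarrow> real"
  assumes "0 < \<alpha>" "\<alpha> \<le> 1" "0 < \<beta>" "\<beta> \<le> 1"
    and "F_plus \<alpha> \<beta> E"
    and "\<theta> > (1 + 2 * \<alpha>) / (2 * \<alpha>)"
    and "h \<in> gauge_class"
    and "C > 0"
    and "\<forall>\<^sub>F x in at_right 0. h x \<ge> C * x powr (\<beta> / 2 + \<alpha>) * (ln (1 / x)) powr \<theta>"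
  shows "hausdorff_h h E > 0"
proof (rule ccontr)
  assume "\<not> hausdorff_h h E > 0"
  then have E0: "hausdorff_h h E = 0" by (simp add: not_gr_zero)
  have al: "0 < \<alpha>" by fact
  have be: "0 < \<beta>" "\<beta> \<le> 1" by fact+
  have C: "0 < C" by fact
  have hg: "h \<in> gauge_class" by fact
  obtain L where L: "L \<subseteq> sphere 0 1" "hausdorff_h (\<lambda>x. x powr \<beta>) L > 0"
     and Lseg: "\<forall>e\<in>L. \<exists>a t. t > 0 \<and> hausdorff_h (\<lambda>x. x powr \<alpha>) (closed_segment a (a + t *\<^sub>R e) \<inter> E) > 0"
    using assms(5) unfolding F_plus_def by blast
  obtain A where A: "\<forall>e\<in>L. \<exists>t. t > 0 \<and> hausdorff_h (\<lambda>x. x powr \<alpha>) (closed_segment (A e) (A e + t *\<^sub>R e) \<inter> E) > 0"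
    using bchoice[OF Lseg] by blast
  obtain T where AT: "\<forall>e\<in>L. T e > 0 \<and> hausdorff_h (\<lambda>x. x powr \<alpha>) (closed_segment (A e) (A e + T e *\<^sub>R e) \<inter> E) > 0"
    using bchoice[OF A] by blast
  define S where "S e = closed_segment (A e) (A e + T e *\<^sub>R e)" for e
  have cS: "0 < cont \<alpha> (S e \<inter> E)" if "e \<in> L" for e
    using cont_pos_of_hausdorff[OF al] AT that unfolding S_def by blast
  have cL: "0 < cont \<beta> L" using cont_pos_of_hausdorff[OF be(1) L(2)] .
  define Ln where "Ln n = {e\<in>L. ennreal (1/(real n + 1)) < cont \<alpha> (S e \<inter> E)}" for n :: nat
  have Lcov: "L \<subseteq> (\<Union>n. Ln n)"
  proof
    fix e assume e: "e \<in> L"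
    have "\<exists>n::nat. ennreal (1/(real n + 1)) < cont \<alpha> (S e \<inter> E)"
    proof (cases "cont \<alpha> (S e \<inter> E)" rule: ennreal_cases)
      case (real y)
      then have "0 < y" using cS[OF e] by simp
      then obtain n where n: "n > 0" "inverse (real n) < y" using ex_inverse_of_nat_less by blast
      have "1/(real n + 1) \<le> inverse (real n)" using n(1) by (simp add: inverse_eq_divide frac_le)
      then have "1/(real n + 1) < y" using n(2) by linarith
      then show ?thesis using real by (intro exI[of _ n]) (simp add: ennreal_less_iff)
    next
      case top
      then show ?thesis by simp
    qed
    then show "e \<in> (\<Union>n. Ln n)" using e unfolding Ln_def by blast
  qed
  have "cont \<beta> L \<le> (\<Sum>n. cont \<beta> (Ln n))" by (rule order_trans[OF cont_mono[OF Lcov] cont_Union])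
  have "\<exists>n. 0 < cont \<beta> (Ln n)"
  proof (rule ccontr)
    assume "\<not> (\<exists>n. 0 < cont \<beta> (Ln n))"
    then have "\<And>n. cont \<beta> (Ln n) = 0" by (simp add: not_gr_zero)
    then have "cont \<beta> L \<le> 0" using \<open>cont \<beta> L \<le> (\<Sum>n. cont \<beta> (Ln n))\<close> by simp
    then show False using cL by simp
  qed
  then obtain n0 where n0: "0 < cont \<beta> (Ln n0)" by blast
  define M0 where "M0 = Ln n0"
  define c0 where "c0 = 1 / (real n0 + 1)"
  have c0: "0 < c0" "c0 \<le> 1" unfolding c0_def by auto
  have M0: "M0 \<subseteq> sphere 0 1" unfolding M0_def Ln_def using L(1) by auto
  have M0L: "e \<in> L" "ennreal c0 < cont \<alpha> (S e \<inter> E)" if "e \<in> M0" for e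
    using that unfolding M0_def Ln_def c0_def by auto
  define b where "b = enn2real (cont \<beta> M0)"
  have le2M0: "cont \<beta> M0 \<le> ennreal 2" by (rule cont_sphere_le2[OF M0 be])
  have cb: "cont \<beta> M0 = ennreal b" unfolding b_def using le2M0
    by (metis enn2real_eq_0_iff ennreal_enn2real_if ennreal_neq_top neq_top_trans)
  have bpos: "0 < b" using n0 cb unfolding M0_def by (simp add: b_def)
  define p where "p = 1 + 1/(2*\<alpha>)"
  have "0 < 1/(2*\<alpha>)" using al by simp
  then have p0: "0 < p" unfolding p_def by linarith
  have pth: "p < \<theta>"
  proof -
    have "(1 + 2 * \<alpha>) / (2 * \<alpha>) = p" unfolding p_def using al by (simp add: field_simps)
    then show ?thesis using assms(6) by simp
  qed
  define ga where "ga = \<theta> / p"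
  have ga1: "1 < ga" unfolding ga_def using pth p0 by simp
  have smp: "summable (\<lambda>k::nat. (real k + 1) powr (- ga))"
  proof -
    have "summable (\<lambda>n::nat. real n powr (- ga))" using ga1 by (simp add: summable_real_powr_iff)
    then have "summable (\<lambda>n::nat. real (Suc n) powr (- ga))" by (rule summable_Suc_iff[THEN iffD2])
    then show ?thesis by (simp add: add.commute)
  qed
  define Ss where "Ss = (\<Sum>k. (real k + 1) powr (- ga))"
  have Ss0: "0 \<le> Ss" unfolding Ss_def by (rule suminf_nonneg[OF smp]) simp
  define c where "c = c0 / (2 * (Ss + 1))"
  have cpos: "0 < c" unfolding c_def using c0 Ss0 by simp
  have cSs: "c * Ss < c0"
  proof -
    have "c * Ss = c0 * (Ss / (2 * (Ss + 1)))" unfolding c_def by simp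
    also have "\<dots> < c0 * 1" using c0 Ss0 by (intro mult_strict_left_mono) auto
    finally show ?thesis by simp
  qed
  have c1: "c \<le> 1" unfolding c_def using c0 Ss0 by (simp add: field_simps)
  define t where "t k = c * (real k + 1) powr (- ga)" for k :: nat
  have tpos: "0 < t k" for k unfolding t_def using cpos by simp
  have t1: "t k \<le> 1" for k
  proof -
    have "(real k + 1) powr (- ga) \<le> (real k + 1) powr 0" using ga1 by (intro powr_mono) auto
    then have "(real k + 1) powr (- ga) \<le> 1" by simp
    then show ?thesis unfolding t_def using c1 cpos
      by (metis mult_le_one less_imp_le powr_ge_zero)
  qed
  have tsum: "(\<Sum>k. ennreal (t k)) = ennreal (c * Ss)"
  proof -
    have st: "summable t" unfolding t_def by (rule summable_mult[OF smp])
    have "(\<Sum>k. ennreal (t k)) = ennreal (\<Sum>k. t k)"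
      by (rule suminf_ennreal2[OF _ st]) (simp add: less_imp_le tpos)
    also have "(\<Sum>k. t k) = c * Ss" unfolding t_def Ss_def by (rule suminf_mult[OF smp])
    finally show ?thesis .
  qed
  define kap where "kap = sqrt (C^2 * 2 powr (-(2*\<alpha>+\<beta>)) * (ln 2) powr (2*\<theta>) * c powr (2 * (1 + 1/(2*\<alpha>)))
           / (2880 * 2 powr \<beta> * 6 powr (1/\<alpha>)))"
  have kap: "0 < kap" unfolding kap_def using C cpos by simp
  obtain x0 where x0: "0 < x0" "\<And>y. 0 < y \<Longrightarrow> y < x0 \<Longrightarrow> C * y powr (\<beta> / 2 + \<alpha>) * (ln (1 / y)) powr \<theta> \<le> h y"
    using assms(9) unfolding eventually_at_right_field by auto
  obtain k1 where k1: "(1/2::real)^k1 < x0" using real_arch_pow_inv[OF x0(1), of "1/2"] by auto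
  have pk1: "2 powr (- real k1) = (1/2::real)^k1"
    by (simp add: powr_minus powr_realpow power_one_over inverse_eq_divide)
  define ep where "ep = kap * b / 2"
  have ep: "0 < ep" unfolding ep_def using kap bpos by simp
  obtain U where U: "E \<subseteq> (\<Union>i. U i)" "\<And>i. bounded (U i)" "\<And>i. diameter (U i) < 2 powr (- real k1)"
    and sm: "summable (\<lambda>i. h (diameter (U i)))" and sU: "(\<Sum>i. h (diameter (U i))) < ep"
    using cover_of_zero[OF E0 _ ep hg, of "2 powr (- real k1)"] by auto
  have d1: "2 powr (- real k1) < x0" using pk1 k1 by simp
  define lev where "lev i = nat \<lfloor>log 2 (1 / diameter (U i))\<rfloor>" for i
  define Ik where "Ik k = {i. 0 < diameter (U i) \<and> lev i = k}" for k
  define x where "x k = 2 powr (- (real k + 1))" for k :: nat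
  have levp: "k1 \<le> lev i" "diameter (U i) \<le> 2 powr (- real (lev i))" "x (lev i) < diameter (U i)"
    if "0 < diameter (U i)" for i
    using level_props[OF that U(3)[of i]] unfolding lev_def x_def by auto
  have dge: "0 \<le> diameter (U i)" for i by (rule diameter_ge_0[OF U(2)])
  have hn: "0 \<le> h y" if "0 \<le> y" for y using hg that unfolding gauge_class_def by blast
  have hmono: "h y \<le> h z" if "0 \<le> y" "y \<le> z" for y z
  proof -
    have "mono_on {0..} h" using hg unfolding gauge_class_def by blast
    then show ?thesis using that by (auto elim!: mono_onD)
  qed
  have xpos: "0 < x k" for k unfolding x_def by simp
  have hx: "C * (x k) powr (\<beta> / 2 + \<alpha>) * (ln (1 / x k)) powr \<theta> \<le> h (x k)" if "k1 \<le> k" for k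
  proof (rule x0(2)[OF xpos])
    have "x k \<le> 2 powr (- real k1)" unfolding x_def using that by (intro powr_mono) auto
    then show "x k < x0" using d1 by simp
  qed
  have hxpos: "0 < h (x k)" if "k1 \<le> k" for k
  proof -
    have "x k < 1" unfolding x_def by (simp add: powr_less_one)
    then have "1 < 1 / x k" using xpos[of k] by (simp add: field_simps)
    then have "0 < ln (1 / x k)" by (rule ln_gt_zero)
    then have "0 < C * (x k) powr (\<beta> / 2 + \<alpha>) * (ln (1 / x k)) powr \<theta>" using C xpos[of k] by simp
    then show ?thesis using hx[OF that] by linarith
  qed
  have Ik_low: "Ik k = {}" if "k < k1" for k
    using levp(1) that unfolding Ik_def by fastforce
  have hIk: "h (x k) \<le> h (diameter (U i))" if "i \<in> Ik k" for i k
    using that levp(3)[of i] xpos[of k] unfolding Ik_def by (auto intro!: hmono)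
  have sumfin: "(\<Sum>i\<in>G. h (diameter (U i))) \<le> (\<Sum>i. h (diameter (U i)))" if "finite G" for G
    by (rule sum_le_suminf[OF sm that]) (simp add: hn dge)
  have finIk: "finite (Ik k)" for k
  proof (cases "k < k1")
    case True then show ?thesis using Ik_low by simp
  next
    case False
    then have hk: "0 < h (x k)" using hxpos by simp
    have "finite (Ik k) \<and> card (Ik k) \<le> nat \<lceil>ep / h (x k)\<rceil>"
    proof (rule finite_if_finite_subsets_card_bdd)
      fix G assume G: "G \<subseteq> Ik k" "finite G"
      have "real (card G) * h (x k) = (\<Sum>i\<in>G. h (x k))" by simp
      also have "\<dots> \<le> (\<Sum>i\<in>G. h (diameter (U i)))" using G hIk by (intro sum_mono) auto
      also have "\<dots> < ep" using sumfin[OF G(2)] sU by linarith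
      finally have "real (card G) \<le> ep / h (x k)" using hk by (simp add: pos_le_divide_eq less_imp_le)
      then show "card G \<le> nat \<lceil>ep / h (x k)\<rceil>" by linarith
    qed
    then show ?thesis by blast
  qed
  have costK: "(\<Sum>k<K. real (card (Ik k)) * h (x k)) \<le> ep" for K
  proof -
    have "(\<Sum>k<K. real (card (Ik k)) * h (x k)) \<le> (\<Sum>k<K. \<Sum>i\<in>Ik k. h (diameter (U i)))"
    proof (rule sum_mono)
      fix k
      have "real (card (Ik k)) * h (x k) = (\<Sum>i\<in>Ik k. h (x k))" by simp
      also have "\<dots> \<le> (\<Sum>i\<in>Ik k. h (diameter (U i)))" using hIk by (intro sum_mono) auto
      finally show "real (card (Ik k)) * h (x k) \<le> (\<Sum>i\<in>Ik k. h (diameter (U i)))" .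
    qed
    also have "\<dots> = (\<Sum>i\<in>(\<Union>k<K. Ik k). h (diameter (U i)))"
      by (rule sum.UNION_disjoint[symmetric]) (use finIk in \<open>auto simp: Ik_def\<close>)
    also have "\<dots> \<le> (\<Sum>i. h (diameter (U i)))" by (rule sumfin) (simp add: finIk)
    finally show ?thesis using sU by linarith
  qed
  define B where "B k = (\<Union>i\<in>Ik k. U i)" for k
  define Mk where "Mk k = {e\<in>M0. ennreal (t k) \<le> cont \<alpha> (S e \<inter> B k)}" for k
  have MkM0: "Mk k \<subseteq> M0" for k unfolding Mk_def by auto
  have perlevel: "kap * enn2real (cont \<beta> (Mk k)) \<le> real (card (Ik k)) * h (x k)" for k
  proof (cases "k < k1")
    case True
    then have "B k = {}" unfolding B_def using Ik_low by simp
    then have "Mk k = {}" unfolding Mk_def using tpos[of k] by auto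
    then show ?thesis using True Ik_low by simp
  next
    case False
    then have kk: "k1 \<le> k" by simp
    show ?thesis unfolding kap_def
    proof (rule level_bound[where I="Ik k" and U=U and M="Mk k" and A=A and T=T and k=k])
      show "finite (Ik k)" by (rule finIk)
      show "bounded (U i) \<and> U i \<noteq> {} \<and> diameter (U i) \<le> 2 powr - real k" if "i \<in> Ik k" for i
      proof -
        have "0 < diameter (U i)" "lev i = k" using that unfolding Ik_def by auto
        moreover then have "U i \<noteq> {}" by auto
        ultimately show ?thesis using U(2) levp(2)[of i] by auto
      qed
      show "Mk k \<subseteq> sphere 0 1" using MkM0 M0 by blast
      show "0 \<le> T e" if "e \<in> Mk k" for e using AT M0L(1) MkM0 that by (meson less_imp_le subsetD)
      show "ennreal (c * (real k + 1) powr - (\<theta> / (1 + 1 / (2 * \<alpha>))))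
           \<le> cont \<alpha> (closed_segment (A e) (A e + T e *\<^sub>R e) \<inter> \<Union> (U ` Ik k))" if "e \<in> Mk k" for e
        using that unfolding Mk_def t_def ga_def p_def S_def B_def by auto
      show "c * (real k + 1) powr - (\<theta> / (1 + 1 / (2 * \<alpha>))) \<le> 1"
        using t1[of k] unfolding t_def ga_def p_def .
      show "C * (2 powr - (real k + 1)) powr (\<beta> / 2 + \<alpha>) * ln (1 / 2 powr - (real k + 1)) powr \<theta> \<le> h (x k)"
        using hx[OF kk] unfolding x_def .
    qed (use al be cpos C in auto)
  qed
  have Mcov: "M0 \<subseteq> (\<Union>k. Mk k)"
  proof
    fix e assume e: "e \<in> M0"
    define P0 where "P0 = (\<Union>i\<in>{i. diameter (U i) = 0}. U i)"
    have split: "S e \<inter> E \<subseteq> (S e \<inter> P0) \<union> (\<Union>k. S e \<inter> B k)"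
    proof
      fix y assume y: "y \<in> S e \<inter> E"
      then obtain i where i: "y \<in> U i" using U(1) by blast
      show "y \<in> (S e \<inter> P0) \<union> (\<Union>k. S e \<inter> B k)"
      proof (cases "diameter (U i) = 0")
        case True then show ?thesis using y i unfolding P0_def by blast
      next
        case False
        then have "i \<in> Ik (lev i)" unfolding Ik_def using dge[of i] by simp
        then show ?thesis using y i unfolding B_def by blast
      qed
    qed
    have P00: "cont \<alpha> (S e \<inter> P0) = 0"
    proof -
      define V where "V i = (if diameter (U i) = 0 then U i else {})" for i
      have "S e \<inter> P0 \<subseteq> (\<Union>i. V i)" unfolding P0_def V_def by auto
      moreover have "bounded (V i)" for i unfolding V_def using U(2) by simp
      ultimately have "cont \<alpha> (S e \<inter> P0) \<le> (\<Sum>i. ennreal (diameter (V i) powr \<alpha>))" by (rule cont_cover)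
      also have "(\<Sum>i. ennreal (diameter (V i) powr \<alpha>)) = (\<Sum>i. 0)"
        by (rule suminf_cong) (simp add: V_def)
      finally show ?thesis by simp
    qed
    have "cont \<alpha> (S e \<inter> E) \<le> cont \<alpha> ((S e \<inter> P0) \<union> (\<Union>k. S e \<inter> B k))" by (rule cont_mono[OF split])
    also have "\<dots> \<le> cont \<alpha> (S e \<inter> P0) + cont \<alpha> (\<Union>k. S e \<inter> B k)" by (rule cont_Un)
    also have "\<dots> \<le> (\<Sum>k. cont \<alpha> (S e \<inter> B k))" unfolding P00 add.left_neutral by (rule cont_Union)
    finally have up: "cont \<alpha> (S e \<inter> E) \<le> (\<Sum>k. cont \<alpha> (S e \<inter> B k))" .
    have "\<exists>k. ennreal (t k) \<le> cont \<alpha> (S e \<inter> B k)"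
    proof (rule ccontr)
      assume "\<not> (\<exists>k. ennreal (t k) \<le> cont \<alpha> (S e \<inter> B k))"
      then have "\<And>k. cont \<alpha> (S e \<inter> B k) \<le> ennreal (t k)" by (meson not_le less_imp_le)
      then have "(\<Sum>k. cont \<alpha> (S e \<inter> B k)) \<le> (\<Sum>k. ennreal (t k))" by (intro suminf_le) auto
      then have "ennreal c0 < ennreal (c * Ss)" using up M0L(2)[OF e] tsum by simp
      then have "c0 < c * Ss" using ennreal_less_iff[of c0 "c * Ss"] c0(1) by simp
      then show False using cSs by simp
    qed
    then show "e \<in> (\<Union>k. Mk k)" using e unfolding Mk_def by blast
  qed
  define mk where "mk k = enn2real (cont \<beta> (Mk k))" for k
  have cmk: "cont \<beta> (Mk k) = ennreal (mk k)" for k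
  proof -
    have "cont \<beta> (Mk k) \<le> ennreal 2" by (rule cont_sphere_le2[OF _ be]) (use MkM0 M0 in blast)
    then show ?thesis unfolding mk_def
      by (metis enn2real_eq_0_iff ennreal_enn2real_if ennreal_neq_top neq_top_trans)
  qed
  have mk0: "0 \<le> mk k" for k unfolding mk_def by simp
  have partial: "(\<Sum>k<K. mk k) \<le> ep / kap" for K
  proof -
    have "kap * (\<Sum>k<K. mk k) = (\<Sum>k<K. kap * mk k)" by (simp add: sum_distrib_left)
    also have "\<dots> \<le> (\<Sum>k<K. real (card (Ik k)) * h (x k))" using perlevel unfolding mk_def by (intro sum_mono) auto
    also have "\<dots> \<le> ep" by (rule costK)
    finally show ?thesis using kap by (simp add: pos_le_divide_eq mult.commute)
  qed
  have smk: "summable mk" by (rule summableI_nonneg_bounded[OF mk0 partial])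
  have mksum: "(\<Sum>k. mk k) \<le> ep / kap" by (rule suminf_le_const[OF smk partial])
  have "ennreal b = cont \<beta> M0" using cb by simp
  also have "\<dots> \<le> cont \<beta> (\<Union>k. Mk k)" by (rule cont_mono[OF Mcov])
  also have "\<dots> \<le> (\<Sum>k. cont \<beta> (Mk k))" by (rule cont_Union)
  also have "\<dots> = (\<Sum>k. ennreal (mk k))" by (simp add: cmk)
  also have "\<dots> = ennreal (\<Sum>k. mk k)" by (rule suminf_ennreal2[OF mk0 smk])
  finally have "b \<le> (\<Sum>k. mk k)" using suminf_nonneg[OF smk mk0] by (simp add: ennreal_le_iff)
  then have "b \<le> ep / kap" using mksum by linarith
  also have "ep / kap = b / 2" unfolding ep_def using kap by simp
  finally show False using bpos by simp
qed


end
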